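(* Let $\mathcal{G}$ be a simple temporal clique with vertex set $V$, let $X^-$ be the set of emitters produced by the forward construction and $X^+$ the set of collectors produced by the backward construction, and assume $X^-\cup X^+=V$. (i) If there is an emitter $u\in X^-$ with $e^-(u)=\{u,v\}$ such that $\{u,v\}$ is not the edge of smallest label among the edges $\{v,x\}$ with $x\in X^-$, then $\mathcal{G}$ has a $2$-hop dismountable vertex. (ii) If there is a collector $c\in X^+$ with $e^+(c)=\{c,y\}$ such that $\{c,y\}$ is not the edge of largest label among the edges $\{y,z\}$ with $z\in X^+$, then $\mathcal{G}$ has a $2$-hop dismountable vertex.
   Context: A simple temporal clique is a pair $\mathcal{G}=(G,\lambda)$ where $G=(V,E)$ is the complete graph on a finite vertex set $V$ and $\lambda:E\to\mathbb{N}$ assigns to each edge a single integer label such that any two distinct edges sharing an endpoint have different labels; the label of an arc $(x,y)$ is $\lambda(\{x,y\})$. A journey from $x$ to $y$ is a sequence of vertices $x=u_0,\dots,u_k=y$ ($k\ge1$) with $\lambda(\{u_{i-1},u_i\})<\lambda(\{u_i,u_{i+1}\})$ for $1\le i<k$; its length is $k$, its first edge is $\{u_0,u_1\}$ and its last edge is $\{u_{k-1},u_k\}$. For a vertex $v$, $e^-(v)$ (resp. $e^+(v)$) is the edge incident to $v$ with smallest (resp. largest) label. A vertex $x$ is $2$-hop dismountable if there exist vertices $y,z\ne x$ (possibly $y=z$) such that there is a journey of length at most $2$ from $x$ to $y$ whose last edge is $e^-(y)$, and a journey of length at most $2$ from $z$ to $x$ whose first edge is $e^+(z)$. Forward construction: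 let $E^-$ be the set of arcs $(u,v)$ with $\{u,v\}=e^-(v)$, except that if $e^-(u)=e^-(v)=\{u,v\}$ only one of $(u,v),(v,u)$ is included (arbitrarily). Initialize $E^-_T:=E^-$; for every vertex $v$ of out-degree at least $2$ in $(V,E^-)$, with out-arcs $(v,u_1),\dots,(v,u_\ell)$ where $(v,u_\ell)$ has the largest label, for each $i<\ell$: if $u_i$ has out-degree $0$ in $(V,E^-)$ replace $(v,u_i)$ by $(u_i,v)$ in $E^-_T$, otherwise remove $(v,u_i)$ from $E^-_T$. Emitters are vertices of out-degree $0$ in $(V,E^-_T)$. Backward construction: let $E^+$ be the set of arcs $(v,u)$ with $\{u,v\}=e^+(v)$, except that if $e^+(u)=e^+(v)=\{u,v\}$ only one of $(u,v),(v,u)$ is included (arbitrarily). Initialize $E^+_T:=E^+$; for every vertex $v$ of in-degree at least $2$ in $(V,E^+)$, with in-arcs $(u_1,v),\dots,(u_\ell,v)$ where $(u_\ell,v)$ has the smallest label, for each $i<\ell$: if $u_i$ has in-degree $0$ in $(V,E^+)$ replace $(u_i,v)$ by $(v,u_i)$ in $E^+_T$, otherwise remove $(u_i,v)$ from $E^+_T$. Collectors are vertices of in-degree $0$ in $(V,E^+_T)$. *)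

theory Defs
  imports Main
begin

definition edges_at :: "'a set \<Rightarrow> 'a \<Rightarrow> 'a set set" where
  "edges_at V v = {{v, w} | w. w \<in> V \<and> w \<noteq> v}"

definition simple_temporal_clique :: "'a set \<Rightarrow> ('a set \<Rightarrow> nat) \<Rightarrow> bool" where
  "simple_temporal_clique V lam \<longleftrightarrow> finite V \<and>
     (\<forall>v\<in>V. \<forall>w\<in>V. \<forall>w'\<in>V. w \<noteq> v \<and> w' \<noteq> v \<and> w \<noteq> w' \<longrightarrow> lam {v, w} \<noteq> lam {v, w'})"

definition is_emin :: "'a set \<Rightarrow> ('a set \<Rightarrow> nat) \<Rightarrow> 'a \<Rightarrow> 'a set \<Rightarrow> bool" where
  "is_emin V lam v e \<longleftrightarrow> e \<in> edges_at V v \<and> (\<forall>f\<in>edges_at V v. lam e \<le> lam f)"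

definition is_emax :: "'a set \<Rightarrow> ('a set \<Rightarrow> nat) \<Rightarrow> 'a \<Rightarrow> 'a set \<Rightarrow> bool" where
  "is_emax V lam v e \<longleftrightarrow> e \<in> edges_at V v \<and> (\<forall>f\<in>edges_at V v. lam f \<le> lam e)"

definition journey :: "'a set \<Rightarrow> ('a set \<Rightarrow> nat) \<Rightarrow> 'a list \<Rightarrow> bool" where
  "journey V lam us \<longleftrightarrow> length us \<ge> 2 \<and> set us \<subseteq> V \<and>
     (\<forall>i. Suc i < length us \<longrightarrow> us ! i \<noteq> us ! Suc i) \<and>
     (\<forall>i. Suc (Suc i) < length us \<longrightarrow>
        lam {us ! i, us ! Suc i} < lam {us ! Suc i, us ! Suc (Suc i)})"

definition two_hop_dismountable :: "'a set \<Rightarrow> ('a set \<Rightarrow> nat) \<Rightarrow> 'a \<Rightarrow> bool" where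
  "two_hop_dismountable V lam x \<longleftrightarrow> x \<in> V \<and>
     (\<exists>y z. y \<noteq> x \<and> z \<noteq> x \<and>
        (\<exists>us. journey V lam us \<and> length us \<le> 3 \<and> hd us = x \<and> last us = y \<and>
              is_emin V lam y {us ! (length us - 2), last us}) \<and>
        (\<exists>us. journey V lam us \<and> length us \<le> 3 \<and> hd us = z \<and> last us = x \<and>
              is_emax V lam z {us ! 0, us ! 1}))"

definition outdeg :: "('a \<times> 'a) set \<Rightarrow> 'a \<Rightarrow> nat" where
  "outdeg E v = card {w. (v, w) \<in> E}"

definition indeg :: "('a \<times> 'a) set \<Rightarrow> 'a \<Rightarrow> nat" where
  "indeg E v = card {w. (w, v) \<in> E}"

definition minus_base :: "'a set \<Rightarrow> ('a set \<Rightarrow> nat) \<Rightarrow> ('a \<times> 'a) set" where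
  "minus_base V lam = {(u, v). u \<in> V \<and> v \<in> V \<and> u \<noteq> v \<and> is_emin V lam v {u, v}}"

definition plus_base :: "'a set \<Rightarrow> ('a set \<Rightarrow> nat) \<Rightarrow> ('a \<times> 'a) set" where
  "plus_base V lam = {(v, u). u \<in> V \<and> v \<in> V \<and> u \<noteq> v \<and> is_emax V lam v {u, v}}"

(* E is an admissible result of keeping exactly one arc of each symmetric pair (arbitrary choice) *)
definition valid_tiebreak :: "('a \<times> 'a) set \<Rightarrow> ('a \<times> 'a) set \<Rightarrow> bool" where
  "valid_tiebreak B E \<longleftrightarrow> E \<subseteq> B \<and>
     (\<forall>u v. (u, v) \<in> B \<longrightarrow>
        (if (v, u) \<in> B then ((u, v) \<in> E \<longleftrightarrow> (v, u) \<notin> E) else (u, v) \<in> E))"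

(* Forward construction: E^-_T from E^- *)
definition minus_removed :: "('a set \<Rightarrow> nat) \<Rightarrow> ('a \<times> 'a) set \<Rightarrow> ('a \<times> 'a) set" where
  "minus_removed lam Em = {(v, u). (v, u) \<in> Em \<and> outdeg Em v \<ge> 2 \<and>
      \<not> (\<forall>w. (v, w) \<in> Em \<longrightarrow> lam {v, w} \<le> lam {v, u})}"

definition minus_T :: "('a set \<Rightarrow> nat) \<Rightarrow> ('a \<times> 'a) set \<Rightarrow> ('a \<times> 'a) set" where
  "minus_T lam Em = (Em - minus_removed lam Em) \<union>
      {(u, v). (v, u) \<in> minus_removed lam Em \<and> outdeg Em u = 0}"

definition emitters :: "'a set \<Rightarrow> ('a set \<Rightarrow> nat) \<Rightarrow> ('a \<times> 'a) set \<Rightarrow> 'a set" where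
  "emitters V lam Em = {v \<in> V. outdeg (minus_T lam Em) v = 0}"

(* Backward construction: E^+_T from E^+ *)
definition plus_removed :: "('a set \<Rightarrow> nat) \<Rightarrow> ('a \<times> 'a) set \<Rightarrow> ('a \<times> 'a) set" where
  "plus_removed lam Ep = {(u, v). (u, v) \<in> Ep \<and> indeg Ep v \<ge> 2 \<and>
      \<not> (\<forall>w. (w, v) \<in> Ep \<longrightarrow> lam {u, v} \<le> lam {w, v})}"

definition plus_T :: "('a set \<Rightarrow> nat) \<Rightarrow> ('a \<times> 'a) set \<Rightarrow> ('a \<times> 'a) set" where
  "plus_T lam Ep = (Ep - plus_removed lam Ep) \<union>
      {(v, u). (u, v) \<in> plus_removed lam Ep \<and> indeg Ep u = 0}"

definition collectors :: "'a set \<Rightarrow> ('a set \<Rightarrow> nat) \<Rightarrow> ('a \<times> 'a) set \<Rightarrow> 'a set" where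
  "collectors V lam Ep = {v \<in> V. indeg (plus_T lam Ep) v = 0}"

end

theory Submission
  imports Defs
begin

lemma fin_max_ex:
  fixes g :: "'b \<Rightarrow> nat"
  assumes "finite S" "s \<in> S"
  shows "\<exists>s0\<in>S. \<forall>t\<in>S. g t \<le> g s0"
proof -
  have ne: "g ` S \<noteq> {}" using assms by auto
  have "Max (g ` S) \<in> g ` S" using Max_in[OF finite_imageI[OF assms(1)] ne] .
  then obtain s0 where "s0 \<in> S" "g s0 = Max (g ` S)" by auto
  moreover have "\<forall>t\<in>S. g t \<le> Max (g ` S)" using assms by auto
  ultimately show ?thesis by metis
qed

lemma edges_at_iff: "{x, w} \<in> edges_at V x \<longleftrightarrow> w \<in> V \<and> w \<noteq> x"
  unfolding edges_at_def by (auto simp: doubleton_eq_iff)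

lemma emin_props: "is_emin V lam x {x, w} \<Longrightarrow> w \<in> V \<and> w \<noteq> x"
  unfolding is_emin_def using edges_at_iff by metis

lemma emax_props: "is_emax V lam x {x, w} \<Longrightarrow> w \<in> V \<and> w \<noteq> x"
  unfolding is_emax_def using edges_at_iff by metis

lemma stc_inj:
  assumes "simple_temporal_clique V lam" "v \<in> V" "w \<in> V" "w' \<in> V" "w \<noteq> v" "w' \<noteq> v"
    "lam {v, w} = lam {v, w'}"
  shows "w = w'"
  using assms unfolding simple_temporal_clique_def by blast

lemma emin_exists:
  assumes "x \<in> V" "v \<in> V" "v \<noteq> x"
  shows "\<exists>w. is_emin V lam x {x, w}"
proof -
  obtain w where w: "w \<in> V \<and> w \<noteq> x" "\<forall>y. y \<in> V \<and> y \<noteq> x \<longrightarrow> lam {x, w} \<le> lam {x, y}"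
    using ex_has_least_nat[of "\<lambda>w. w \<in> V \<and> w \<noteq> x" v "\<lambda>w. lam {x, w}"] assms by auto
  have "is_emin V lam x {x, w}"
    unfolding is_emin_def using w by (auto simp: edges_at_iff edges_at_def)
  then show ?thesis by blast
qed

lemma journey2: "a \<in> V \<Longrightarrow> b \<in> V \<Longrightarrow> a \<noteq> b \<Longrightarrow> journey V lam [a, b]"
  unfolding journey_def by (auto simp: less_Suc_eq)

lemma journey3: "a \<in> V \<Longrightarrow> b \<in> V \<Longrightarrow> c \<in> V \<Longrightarrow> a \<noteq> b \<Longrightarrow> b \<noteq> c
  \<Longrightarrow> lam {a, b} < lam {b, c} \<Longrightarrow> journey V lam [a, b, c]"
  unfolding journey_def by (auto simp: less_Suc_eq)

lemma card_nz: "finite {w. (v, w) \<in> E} \<Longrightarrow> (v, w) \<in> E \<Longrightarrow> outdeg E v \<noteq> 0"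
  unfolding outdeg_def by auto

lemma card_nz_in: "finite {w. (w, v) \<in> E} \<Longrightarrow> (w, v) \<in> E \<Longrightarrow> indeg E v \<noteq> 0"
  unfolding indeg_def by auto

lemma fin_out: "finite V \<Longrightarrow> E \<subseteq> V \<times> V \<Longrightarrow> finite {w. (v, w) \<in> E}"
  by (rule finite_subset[of _ V]) auto

lemma fin_in: "finite V \<Longrightarrow> E \<subseteq> V \<times> V \<Longrightarrow> finite {w. (w, v) \<in> E}"
  by (rule finite_subset[of _ V]) auto

lemma minus_T_sub: "Em \<subseteq> V \<times> V \<Longrightarrow> minus_T lam Em \<subseteq> V \<times> V"
  unfolding minus_T_def minus_removed_def by auto

lemma plus_T_sub: "Ep \<subseteq> V \<times> V \<Longrightarrow> plus_T lam Ep \<subseteq> V \<times> V"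
  unfolding plus_T_def plus_removed_def by auto

lemma Em_sub: "valid_tiebreak (minus_base V lam) Em \<Longrightarrow> Em \<subseteq> V \<times> V"
  unfolding valid_tiebreak_def minus_base_def by auto

lemma Ep_sub: "valid_tiebreak (plus_base V lam) Ep \<Longrightarrow> Ep \<subseteq> V \<times> V"
  unfolding valid_tiebreak_def plus_base_def by auto

lemma emitter_no_out:
  assumes fin: "finite V" and sub: "Em \<subseteq> V \<times> V"
    and em: "outdeg (minus_T lam Em) x = 0" and xw: "(x, w) \<in> Em"
  shows False
proof -
  have "finite {w. (x, w) \<in> Em}" using fin_out[OF fin sub] .
  then obtain w0 where w0: "(x, w0) \<in> Em" "\<forall>t. (x, t) \<in> Em \<longrightarrow> lam {x, t} \<le> lam {x, w0}"
    using fin_max_ex[of "{w. (x, w) \<in> Em}" w "\<lambda>t. lam {x, t}"] xw by auto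
  have "(x, w0) \<notin> minus_removed lam Em" unfolding minus_removed_def using w0 by auto
  then have "(x, w0) \<in> minus_T lam Em" unfolding minus_T_def using w0 by auto
  then have "outdeg (minus_T lam Em) x \<noteq> 0"
    using card_nz fin_out[OF fin minus_T_sub[OF sub]] by metis
  then show False using em by simp
qed

lemma collector_no_in:
  assumes fin: "finite V" and sub: "Ep \<subseteq> V \<times> V"
    and co: "indeg (plus_T lam Ep) x = 0" and xw: "(w, x) \<in> Ep"
  shows False
proof -
  have "finite {w. (w, x) \<in> Ep}" using fin_in[OF fin sub] .
  then obtain w0 where w0: "(w0, x) \<in> Ep" "\<forall>t. (t, x) \<in> Ep \<longrightarrow> lam {w0, x} \<le> lam {t, x}"
    using ex_has_least_nat[of "\<lambda>t. (t, x) \<in> Ep" w "\<lambda>t. lam {t, x}"] xw by auto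
  have "(w0, x) \<notin> plus_removed lam Ep" unfolding plus_removed_def using w0 by auto
  then have "(w0, x) \<in> plus_T lam Ep" unfolding plus_T_def using w0 by auto
  then have "indeg (plus_T lam Ep) x \<noteq> 0"
    using card_nz_in fin_in[OF fin plus_T_sub[OF sub]] by metis
  then show False using co by simp
qed


lemma tb_in: "valid_tiebreak B E \<Longrightarrow> (u, v) \<in> B \<Longrightarrow> (v, u) \<notin> E \<Longrightarrow> (u, v) \<in> E"
  unfolding valid_tiebreak_def by (metis (full_types))

context
  fixes V :: "'a set" and lam :: "'a set \<Rightarrow> nat" and Em Ep :: "('a \<times> 'a) set"
  assumes stc: "simple_temporal_clique V lam"
    and Em: "valid_tiebreak (minus_base V lam) Em"
    and Ep: "valid_tiebreak (plus_base V lam) Ep"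
begin

lemma finV: "finite V" using stc unfolding simple_temporal_clique_def by simp

lemma emitter_in:
  assumes x: "x \<in> emitters V lam Em" and w: "is_emin V lam x {x, w}"
  shows "(w, x) \<in> Em"
proof -
  have wp: "w \<in> V" "w \<noteq> x" using emin_props[OF w] by auto
  have xV: "x \<in> V" using x unfolding emitters_def by auto
  have "(w, x) \<in> minus_base V lam" unfolding minus_base_def
    using wp xV w by (simp add: insert_commute)
  moreover have "(x, w) \<notin> Em"
    using emitter_no_out[OF finV Em_sub[OF Em]] x unfolding emitters_def by blast
  ultimately show ?thesis using tb_in[OF Em] by blast
qed

lemma collector_out:
  assumes x: "x \<in> collectors V lam Ep" and w: "is_emax V lam x {x, w}"
  shows "(x, w) \<in> Ep"
proof -
  have wp: "w \<in> V" "w \<noteq> x" using emax_props[OF w] by auto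
  have xV: "x \<in> V" using x unfolding collectors_def by auto
  have "(x, w) \<in> plus_base V lam" unfolding plus_base_def
    using wp xV w by (simp add: insert_commute)
  moreover have "(w, x) \<notin> Ep"
    using collector_no_in[OF finV Ep_sub[OF Ep]] x unfolding collectors_def by blast
  ultimately show ?thesis using tb_in[OF Ep] by blast
qed

lemma emitter_partner_not_emitter:
  assumes x: "x \<in> emitters V lam Em" and w: "is_emin V lam x {x, w}"
  shows "w \<notin> emitters V lam Em"
  using emitter_in[OF x w] emitter_no_out[OF finV Em_sub[OF Em]] unfolding emitters_def by blast

lemma collector_partner_not_collector:
  assumes x: "x \<in> collectors V lam Ep" and w: "is_emax V lam x {x, w}"
  shows "w \<notin> collectors V lam Ep"
  using collector_out[OF x w] collector_no_in[OF finV Ep_sub[OF Ep]] unfolding collectors_def by blast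

lemma removed_kills:
  assumes e1: "(w, x1) \<in> Em" and e2: "(w, x2) \<in> Em" and ne: "x1 \<noteq> x2"
    and lt: "lam {w, x1} < lam {w, x2}" and x1: "x1 \<in> emitters V lam Em"
  shows False
proof -
  have sub: "Em \<subseteq> V \<times> V" using Em_sub[OF Em] .
  have "{x1, x2} \<subseteq> {y. (w, y) \<in> Em}" using e1 e2 by auto
  then have "card {x1, x2} \<le> outdeg Em w" unfolding outdeg_def
    using card_mono[OF fin_out[OF finV sub]] by blast
  then have od: "outdeg Em w \<ge> 2" using ne by simp
  have rem: "(w, x1) \<in> minus_removed lam Em" unfolding minus_removed_def
    using e1 e2 od lt by force
  have "{y. (x1, y) \<in> Em} = {}"
    using emitter_no_out[OF finV sub] x1 unfolding emitters_def by blast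
  then have "outdeg Em x1 = 0" unfolding outdeg_def by simp
  then have "(x1, w) \<in> minus_T lam Em" unfolding minus_T_def using rem by blast
  then have "outdeg (minus_T lam Em) x1 \<noteq> 0"
    using card_nz fin_out[OF finV minus_T_sub[OF sub]] by metis
  then show False using x1 unfolding emitters_def by simp
qed

lemma removed_kills_p:
  assumes e1: "(x1, w) \<in> Ep" and e2: "(x2, w) \<in> Ep" and ne: "x1 \<noteq> x2"
    and lt: "lam {x2, w} < lam {x1, w}" and x1: "x1 \<in> collectors V lam Ep"
  shows False
proof -
  have sub: "Ep \<subseteq> V \<times> V" using Ep_sub[OF Ep] .
  have "{x1, x2} \<subseteq> {y. (y, w) \<in> Ep}" using e1 e2 by auto
  then have "card {x1, x2} \<le> indeg Ep w" unfolding indeg_def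
    using card_mono[OF fin_in[OF finV sub]] by blast
  then have od: "indeg Ep w \<ge> 2" using ne by simp
  have rem: "(x1, w) \<in> plus_removed lam Ep" unfolding plus_removed_def
    using e1 e2 od lt by force
  have "{y. (y, x1) \<in> Ep} = {}"
    using collector_no_in[OF finV sub] x1 unfolding collectors_def by blast
  then have "indeg Ep x1 = 0" unfolding indeg_def by simp
  then have "(w, x1) \<in> plus_T lam Ep" unfolding plus_T_def using rem by blast
  then have "indeg (plus_T lam Ep) x1 \<noteq> 0"
    using card_nz_in fin_in[OF finV plus_T_sub[OF sub]] by metis
  then show False using x1 unfolding collectors_def by simp
qed

lemma emitter_partner_inj:
  assumes x1: "x1 \<in> emitters V lam Em" and x2: "x2 \<in> emitters V lam Em"
    and w1: "is_emin V lam x1 {x1, w}" and w2: "is_emin V lam x2 {x2, w}"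
  shows "x1 = x2"
proof (rule ccontr)
  assume ne: "x1 \<noteq> x2"
  have e1: "(w, x1) \<in> Em" using emitter_in[OF x1 w1] .
  have e2: "(w, x2) \<in> Em" using emitter_in[OF x2 w2] .
  have "w \<in> V" "x1 \<in> V" "x2 \<in> V" "x1 \<noteq> w" "x2 \<noteq> w"
    using emin_props[OF w1] emin_props[OF w2] x1 x2 unfolding emitters_def by auto
  then have "lam {w, x1} \<noteq> lam {w, x2}" using stc_inj[OF stc] ne by metis
  then show False
    using removed_kills[OF e1 e2 ne _ x1] removed_kills[OF e2 e1 ne[symmetric] _ x2] by linarith
qed

lemma collector_partner_inj:
  assumes x1: "x1 \<in> collectors V lam Ep" and x2: "x2 \<in> collectors V lam Ep"
    and w1: "is_emax V lam x1 {x1, w}" and w2: "is_emax V lam x2 {x2, w}"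
  shows "x1 = x2"
proof (rule ccontr)
  assume ne: "x1 \<noteq> x2"
  have e1: "(x1, w) \<in> Ep" using collector_out[OF x1 w1] .
  have e2: "(x2, w) \<in> Ep" using collector_out[OF x2 w2] .
  have "w \<in> V" "x1 \<in> V" "x2 \<in> V" "x1 \<noteq> w" "x2 \<noteq> w"
    using emax_props[OF w1] emax_props[OF w2] x1 x2 unfolding collectors_def by auto
  then have "lam {w, x1} \<noteq> lam {w, x2}" using stc_inj[OF stc] ne by metis
  then have "lam {x1, w} \<noteq> lam {x2, w}" by (simp add: insert_commute)
  then show False
    using removed_kills_p[OF e1 e2 ne _ x1] removed_kills_p[OF e2 e1 ne[symmetric] _ x2] by linarith
qed

end


lemma count_half:
  assumes "finite V" "X \<subseteq> V" "inj_on f X" "f ` X \<subseteq> V - X"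
  shows "2 * card X \<le> card V"
proof -
  have fX: "finite X" using assms(1,2) finite_subset by blast
  have "card X = card (f ` X)" using card_image[OF assms(3)] by simp
  also have "\<dots> \<le> card (V - X)" using card_mono[OF finite_Diff[OF assms(1)] assms(4)] .
  also have "\<dots> = card V - card X" using card_Diff_subset[OF fX assms(2)] .
  finally show ?thesis using card_mono[OF assms(1,2)] by linarith
qed

lemma disj_from_count:
  assumes "finite V" "X \<subseteq> V" "C \<subseteq> V" "2 * card X \<le> card V" "2 * card C \<le> card V" "X \<union> C = V"
  shows "X \<inter> C = {}"
proof -
  have fX: "finite X" "finite C" using assms(1,2,3) finite_subset by blast+
  have "card X + card C = card (X \<union> C) + card (X \<inter> C)" using card_Un_Int[OF fX] .
  then have "card X + card C = card V + card (X \<inter> C)" using assms(6) by simp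
  then have "card (X \<inter> C) = 0" using assms(4,5) by linarith
  then show ?thesis using fX by simp
qed

lemma emax_exists:
  assumes "finite V" "x \<in> V" "v \<in> V" "v \<noteq> x"
  shows "\<exists>w. is_emax V lam x {x, w}"
proof -
  have "finite (V - {x})" using assms by simp
  then obtain w where w: "w \<in> V - {x}" "\<forall>y\<in>V - {x}. lam {x, y} \<le> lam {x, w}"
    using fin_max_ex[of "V - {x}" v "\<lambda>w. lam {x, w}"] assms by auto
  have "is_emax V lam x {x, w}"
    unfolding is_emax_def using w by (auto simp: edges_at_iff edges_at_def)
  then show ?thesis by blast
qed

context
  fixes V :: "'a set" and lam :: "'a set \<Rightarrow> nat" and Em Ep :: "('a \<times> 'a) set"
  assumes stc: "simple_temporal_clique V lam"
    and Em: "valid_tiebreak (minus_base V lam) Em"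
    and Ep: "valid_tiebreak (plus_base V lam) Ep"
begin

lemma disjoint_EC:
  assumes cover: "emitters V lam Em \<union> collectors V lam Ep = V"
    and uv: "u \<in> V" "v \<in> V" "u \<noteq> v"
  shows "emitters V lam Em \<inter> collectors V lam Ep = {}"
proof -
  have fin: "finite V" using finV[OF stc Em Ep] .
  have oth: "\<And>x. x \<in> V \<Longrightarrow> \<exists>v'\<in>V. v' \<noteq> x" using uv by metis
  define f where "f = (\<lambda>x. SOME w. is_emin V lam x {x, w})"
  define g where "g = (\<lambda>x. SOME w. is_emax V lam x {x, w})"
  have fx: "is_emin V lam x {x, f x}" if "x \<in> V" for x
    unfolding f_def using oth[OF that] emin_exists[OF that] someI_ex by metis
  have gx: "is_emax V lam x {x, g x}" if "x \<in> V" for x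
    unfolding g_def using oth[OF that] emax_exists[OF fin that] someI_ex by metis
  let ?X = "emitters V lam Em" and ?C = "collectors V lam Ep"
  have XV: "?X \<subseteq> V" unfolding emitters_def by auto
  have CV: "?C \<subseteq> V" unfolding collectors_def by auto
  have "inj_on f ?X"
  proof (rule inj_onI)
    fix a b assume a: "a \<in> ?X" and b: "b \<in> ?X" and e: "f a = f b"
    have ha: "is_emin V lam a {a, f a}" using fx a XV by blast
    have hb: "is_emin V lam b {b, f a}" using fx b XV e by (metis subsetD)
    show "a = b" using emitter_partner_inj[OF stc Em Ep a b ha hb] .
  qed
  moreover have "f ` ?X \<subseteq> V - ?X"
  proof (rule image_subsetI)
    fix x assume x: "x \<in> ?X"
    have h: "is_emin V lam x {x, f x}" using fx x XV by blast
    show "f x \<in> V - ?X" using emin_props[OF h] emitter_partner_not_emitter[OF stc Em Ep x h] by blast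
  qed
  ultimately have hX: "2 * card ?X \<le> card V" using count_half[OF fin XV] by blast
  have "inj_on g ?C"
  proof (rule inj_onI)
    fix a b assume a: "a \<in> ?C" and b: "b \<in> ?C" and e: "g a = g b"
    have ha: "is_emax V lam a {a, g a}" using gx a CV by blast
    have hb: "is_emax V lam b {b, g a}" using gx b CV e by (metis subsetD)
    show "a = b" using collector_partner_inj[OF stc Em Ep a b ha hb] .
  qed
  moreover have "g ` ?C \<subseteq> V - ?C"
  proof (rule image_subsetI)
    fix x assume x: "x \<in> ?C"
    have h: "is_emax V lam x {x, g x}" using gx x CV by blast
    show "g x \<in> V - ?C" using emax_props[OF h] collector_partner_not_collector[OF stc Em Ep x h] by blast
  qed
  ultimately have hC: "2 * card ?C \<le> card V" using count_half[OF fin CV] by blast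
  show ?thesis using disj_from_count[OF fin XV CV hX hC cover] .
qed

lemma nonemitter_F:
  assumes xV: "x \<in> V" and nx: "x \<notin> emitters V lam Em"
  shows "\<exists>y. y \<noteq> x \<and> (\<exists>us. journey V lam us \<and> length us \<le> 3 \<and> hd us = x \<and> last us = y \<and>
              is_emin V lam y {us ! (length us - 2), last us})"
proof -
  have "outdeg (minus_T lam Em) x \<noteq> 0" using nx xV unfolding emitters_def by auto
  then have "{w. (x, w) \<in> minus_T lam Em} \<noteq> {}" unfolding outdeg_def by (metis card.empty)
  then obtain y where xy: "(x, y) \<in> minus_T lam Em" by blast
  show ?thesis
  proof (cases "(x, y) \<in> Em")
    case True
    then have "(x, y) \<in> minus_base V lam" using Em unfolding valid_tiebreak_def by blast
    then have b: "x \<in> V" "y \<in> V" "x \<noteq> y" "is_emin V lam y {x, y}" unfolding minus_base_def by auto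
    show ?thesis
      apply (rule exI[of _ y], rule conjI, use b in simp)
      apply (rule exI[of _ "[x, y]"])
      using b journey2[of x V y lam] by auto
  next
    case False
    then have r: "(y, x) \<in> minus_removed lam Em" using xy unfolding minus_T_def by blast
    then obtain w where yx: "(y, x) \<in> Em" and yw: "(y, w) \<in> Em" and lt: "lam {y, x} < lam {y, w}"
      unfolding minus_removed_def by auto
    have b1: "y \<in> V" "y \<noteq> x" using yx Em unfolding valid_tiebreak_def minus_base_def by auto
    have b2: "w \<in> V" "y \<noteq> w" "is_emin V lam w {y, w}"
      using yw Em unfolding valid_tiebreak_def minus_base_def by auto
    have wx: "w \<noteq> x" using lt by auto
    have lt': "lam {x, y} < lam {y, w}" using lt by (simp add: insert_commute)
    show ?thesis
      apply (rule exI[of _ w], rule conjI, use wx in simp)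
      apply (rule exI[of _ "[x, y, w]"])
      using b1 b2 xV lt' journey3[of x V y w lam] by auto
  qed
qed

lemma noncollector_B:
  assumes xV: "x \<in> V" and nx: "x \<notin> collectors V lam Ep"
  shows "\<exists>z. z \<noteq> x \<and> (\<exists>us. journey V lam us \<and> length us \<le> 3 \<and> hd us = z \<and> last us = x \<and>
              is_emax V lam z {us ! 0, us ! 1})"
proof -
  have "indeg (plus_T lam Ep) x \<noteq> 0" using nx xV unfolding collectors_def by auto
  then have "{w. (w, x) \<in> plus_T lam Ep} \<noteq> {}" unfolding indeg_def by (metis card.empty)
  then obtain z where zx: "(z, x) \<in> plus_T lam Ep" by blast
  show ?thesis
  proof (cases "(z, x) \<in> Ep")
    case True
    then have "(z, x) \<in> plus_base V lam" using Ep unfolding valid_tiebreak_def by blast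
    then have b: "x \<in> V" "z \<in> V" "x \<noteq> z" "is_emax V lam z {x, z}" unfolding plus_base_def by auto
    then have b': "is_emax V lam z {z, x}" by (simp add: insert_commute)
    show ?thesis
      apply (rule exI[of _ z], rule conjI, use b in simp)
      apply (rule exI[of _ "[z, x]"])
      using b b' journey2[of z V x lam] by auto
  next
    case False
    then have r: "(x, z) \<in> plus_removed lam Ep" using zx unfolding plus_T_def by blast
    then obtain w where xz: "(x, z) \<in> Ep" and wz: "(w, z) \<in> Ep" and lt: "lam {w, z} < lam {x, z}"
      unfolding plus_removed_def by auto
    have b1: "z \<in> V" "z \<noteq> x" using xz Ep unfolding valid_tiebreak_def plus_base_def by auto
    have b2: "w \<in> V" "z \<noteq> w" "is_emax V lam w {z, w}"
      using wz Ep unfolding valid_tiebreak_def plus_base_def by auto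
    have b2': "is_emax V lam w {w, z}" using b2 by (simp add: insert_commute)
    have wx: "w \<noteq> x" using lt by auto
    have lt': "lam {w, z} < lam {z, x}" using lt by (simp add: insert_commute)
    show ?thesis
      apply (rule exI[of _ w], rule conjI, use wx in simp)
      apply (rule exI[of _ "[w, z, x]"])
      using b1 b2 b2' xV lt' journey3[of w V z x lam] by auto
  qed
qed

end


theorem lemma7:
  fixes V :: "'a set" and lam :: "'a set \<Rightarrow> nat" and Em Ep :: "('a \<times> 'a) set"
  assumes stc: "simple_temporal_clique V lam"
    and Em: "valid_tiebreak (minus_base V lam) Em"
    and Ep: "valid_tiebreak (plus_base V lam) Ep"
    and cover: "emitters V lam Em \<union> collectors V lam Ep = V"
  shows "((\<exists>u\<in>emitters V lam Em. \<exists>v. is_emin V lam u {u, v} \<and>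
             \<not> (\<forall>x\<in>emitters V lam Em - {v}. lam {u, v} \<le> lam {v, x}))
           \<longrightarrow> (\<exists>x\<in>V. two_hop_dismountable V lam x))
       \<and> ((\<exists>c\<in>collectors V lam Ep. \<exists>y. is_emax V lam c {c, y} \<and>
             \<not> (\<forall>z\<in>collectors V lam Ep - {y}. lam {y, z} \<le> lam {c, y}))
           \<longrightarrow> (\<exists>x\<in>V. two_hop_dismountable V lam x))"
proof (intro conjI impI)
  assume "\<exists>u\<in>emitters V lam Em. \<exists>v. is_emin V lam u {u, v} \<and>
             \<not> (\<forall>x\<in>emitters V lam Em - {v}. lam {u, v} \<le> lam {v, x})"
  then obtain u v where u: "u \<in> emitters V lam Em" and uv: "is_emin V lam u {u, v}"
    and nall: "\<not> (\<forall>x\<in>emitters V lam Em - {v}. lam {u, v} \<le> lam {v, x})"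
    by blast
  from nall obtain x where x0: "x \<in> emitters V lam Em - {v}" and nle: "\<not> lam {u, v} \<le> lam {v, x}"
    by blast
  have x: "x \<in> emitters V lam Em" and xv: "x \<noteq> v" using x0 by auto
  have lt: "lam {v, x} < lam {u, v}" using nle by simp
  have uV: "u \<in> V" using u unfolding emitters_def by auto
  have xV: "x \<in> V" using x unfolding emitters_def by auto
  have vV: "v \<in> V" "v \<noteq> u" using emin_props[OF uv] by auto
  have xu: "x \<noteq> u" using lt by (auto simp: insert_commute)
  have "x \<notin> collectors V lam Ep"
    using disjoint_EC[OF stc Em Ep cover uV vV(1) vV(2)[symmetric]] x by blast
  then obtain z where z: "z \<noteq> x" and B: "\<exists>us. journey V lam us \<and> length us \<le> 3 \<and> hd us = z \<and> last us = x \<and>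
              is_emax V lam z {us ! 0, us ! 1}"
    using noncollector_B[OF stc Em Ep xV] by blast
  have lt': "lam {x, v} < lam {v, u}" using lt by (simp add: insert_commute)
  have uv': "is_emin V lam u {v, u}" using uv by (simp add: insert_commute)
  have J: "journey V lam [x, v, u]" using journey3[OF xV vV(1) uV xv vV(2) lt'] .
  have F: "\<exists>us. journey V lam us \<and> length us \<le> 3 \<and> hd us = x \<and> last us = u \<and>
              is_emin V lam u {us ! (length us - 2), last us}"
    using J uv' by (intro exI[of _ "[x, v, u]"]) auto
  have "two_hop_dismountable V lam x"
    unfolding two_hop_dismountable_def
    apply (rule conjI[OF xV])
    apply (rule exI[of _ u], rule exI[of _ z])
    using xu z F B by simp
  then show "\<exists>x\<in>V. two_hop_dismountable V lam x" using xV by blast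
next
  assume "\<exists>c\<in>collectors V lam Ep. \<exists>y. is_emax V lam c {c, y} \<and>
             \<not> (\<forall>z\<in>collectors V lam Ep - {y}. lam {y, z} \<le> lam {c, y})"
  then obtain c y where c: "c \<in> collectors V lam Ep" and cy: "is_emax V lam c {c, y}"
    and nall: "\<not> (\<forall>z\<in>collectors V lam Ep - {y}. lam {y, z} \<le> lam {c, y})"
    by blast
  from nall obtain z where z0: "z \<in> collectors V lam Ep - {y}" and nle: "\<not> lam {y, z} \<le> lam {c, y}"
    by blast
  have z: "z \<in> collectors V lam Ep" and zy: "z \<noteq> y" using z0 by auto
  have lt: "lam {c, y} < lam {y, z}" using nle by simp
  have cV: "c \<in> V" using c unfolding collectors_def by auto
  have zV: "z \<in> V" using z unfolding collectors_def by auto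
  have yV: "y \<in> V" "y \<noteq> c" using emax_props[OF cy] by auto
  have zc: "c \<noteq> z" using lt by (auto simp: insert_commute)
  have "z \<notin> emitters V lam Em"
    using disjoint_EC[OF stc Em Ep cover cV yV(1) yV(2)[symmetric]] z by blast
  then obtain w where w: "w \<noteq> z" and F: "\<exists>us. journey V lam us \<and> length us \<le> 3 \<and> hd us = z \<and> last us = w \<and>
              is_emin V lam w {us ! (length us - 2), last us}"
    using nonemitter_F[OF stc Em Ep zV] by blast
  have J: "journey V lam [c, y, z]" using journey3[OF cV yV(1) zV yV(2)[symmetric] zy[symmetric] lt] .
  have B: "\<exists>us. journey V lam us \<and> length us \<le> 3 \<and> hd us = c \<and> last us = z \<and>
              is_emax V lam c {us ! 0, us ! 1}"
    using J cy by (intro exI[of _ "[c, y, z]"]) auto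
  have "two_hop_dismountable V lam z"
    unfolding two_hop_dismountable_def
    apply (rule conjI[OF zV])
    apply (rule exI[of _ w], rule exI[of _ c])
    using zc w F B by simp
  then show "\<exists>x\<in>V. two_hop_dismountable V lam x" using zV by blast
qed

end
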